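(* Assume $d\ge2$. Then $a^*_{d-2}+a^*_{d-1}=a^*_{d-1}+a^*_d$ if and only if $r=s$.
   Context: Fix an integer $d\ge0$ and $r,s\in(-1,\infty)$. Write $(x)_i=x(x+1)\cdots(x+i-1)$, $(x)_0=1$. For $0\le i\le d$ put $\theta^*_i=i$. Put $b^*_i=\frac{(d-i)(i-d-s)(2d-2i+r+s+2)_i}{(2d-2i+r+s)_{i+1}}$ ($0\le i\le d-1$), $c^*_i=\frac{i(i-d-r-1)(d-i+r+s+1)_{d-i}}{(d-i+r+s+2)_{d-i+1}}$ ($1\le i\le d$), $b^*_d=c^*_0=0$, and $a^*_i=\theta^*_0-b^*_i-c^*_i$ for $0\le i\le d$. *)

theory Defs
  imports Complex_Main
begin

text \<open>(x)_i is the rising factorial, i.e. the library's pochhammer x i.\<close>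

definition thetastar :: "nat \<Rightarrow> real" where
  "thetastar i = real i"

definition bstar :: "nat \<Rightarrow> real \<Rightarrow> real \<Rightarrow> nat \<Rightarrow> real" where
  "bstar d r s i =
     (if i < d then
        (real d - real i) * (real i - real d - s)
          * pochhammer (2 * real d - 2 * real i + r + s + 2) i
          / pochhammer (2 * real d - 2 * real i + r + s) (i + 1)
      else 0)"

definition cstar :: "nat \<Rightarrow> real \<Rightarrow> real \<Rightarrow> nat \<Rightarrow> real" where
  "cstar d r s i =
     (if i = 0 then 0 else
        real i * (real i - real d - r - 1)
          * pochhammer (real d - real i + r + s + 1) (d - i)
          / pochhammer (real d - real i + r + s + 2) (d - i + 1))"

definition astar :: "nat \<Rightarrow> real \<Rightarrow> real \<Rightarrow> nat \<Rightarrow> real" where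
  "astar d r s i = thetastar 0 - bstar d r s i - cstar d r s i"

end

theory Submission
  imports Defs
begin

lemma poch_pos: "(a::real) > 0 \<Longrightarrow> pochhammer a n > 0"
  by (simp add: pochhammer_pos)

lemma bstar_dm2:
  fixes n :: nat and r s :: real
  assumes "r + s > -2"
  shows "bstar (n+2) r s n = -2*(2+s)*(real n + 5 + r + s)/((4+r+s)*(5+r+s))"
proof -
  define t where "t = r + s"
  have p: "pochhammer (5+t) n > 0" using assms by (intro poch_pos) (simp add: t_def)
  have e1: "pochhammer (4+t) (Suc n) = (4+t) * pochhammer (5+t) n"
    by (simp add: pochhammer_rec algebra_simps)
  have e2: "(5+t) * pochhammer (6+t) n = pochhammer (5+t) n * (5+t+real n)"
  proof -
    have "pochhammer (5+t) (Suc n) = (5+t) * pochhammer (6+t) n"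
      by (simp add: pochhammer_rec algebra_simps)
    moreover have "pochhammer (5+t) (Suc n) = pochhammer (5+t) n * (5+t+real n)"
      by (simp add: pochhammer_Suc)
    ultimately show ?thesis by simp
  qed
  have h: "2 * real (n+2) - 2 * real n + r + s + 2 = 6 + t"
          "2 * real (n+2) - 2 * real n + r + s = 4 + t" by (simp_all add: t_def)
  have "bstar (n+2) r s n = 2 * (-2 - s) * pochhammer (6+t) n / ((4+t) * pochhammer (5+t) n)"
    unfolding bstar_def h using e1 by simp
  also have "\<dots> = -2*(2+s)*(real n + 5 + t)/((4+t)*(5+t))"
  proof -
    have t5: "5 + t > 0" "4 + t > 0" using assms by (simp_all add: t_def)
    have gen: "\<And>P Q. P > 0 \<Longrightarrow> (5+t) * Q = P * (5+t+real n) \<Longrightarrow>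
       2 * (-2 - s) * Q / ((4+t) * P) = -2*(2+s)*(real n + 5 + t)/((4+t)*(5+t))"
    proof -
      fix P Q :: real assume P: "P > 0" and Q: "(5+t) * Q = P * (5+t+real n)"
      have QQ: "Q = P * (5+t+real n) / (5+t)" using Q t5 by (simp add: field_simps)
      show "2 * (-2 - s) * Q / ((4+t) * P) = -2*(2+s)*(real n + 5 + t)/((4+t)*(5+t))"
        unfolding QQ using P t5 by (simp add: divide_simps)
    qed
    show ?thesis by (rule gen[OF p e2])
  qed
  finally show ?thesis by (simp add: t_def add.assoc)
qed

lemma cstar_dm2:
  fixes n :: nat and r s :: real
  assumes "r + s > -2"
  shows "cstar (n+2) r s n = real n*(-3-r)*(3+r+s)/((5+r+s)*(6+r+s))"
proof (cases "n = 0")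
  case True then show ?thesis by (simp add: cstar_def)
next
  case False
  have h: "real (n+2) - real n + r + s + 1 = 3 + (r+s)" "real (n+2) - real n + r + s + 2 = 4 + (r+s)"
    "real n - real (n+2) - r - 1 = -3 - r" "n + 2 - n = 2" by simp_all
  have "cstar (n+2) r s n = real n * (-3-r) * ((3+(r+s))*(4+(r+s))) / ((4+(r+s))*((5+(r+s))*(6+(r+s))))"
    using False unfolding cstar_def h
    by (simp add: eval_nat_numeral pochhammer_Suc algebra_simps)
  also have "\<dots> = real n * (-3-r) * (3+(r+s)) / ((5+(r+s))*(6+(r+s)))"
    using assms by (simp add: divide_simps)
  finally show ?thesis by (simp add: add.assoc)
qed

lemma cstar_d:
  fixes n :: nat and r s :: real
  shows "cstar (n+2) r s (n+2) = - real (n+2)*(1+r)/(2+r+s)"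
  by (simp add: cstar_def algebra_simps)

theorem lemma2p8:
  fixes d :: nat and r s :: real
  assumes "d \<ge> 2" and "r > -1" and "s > -1"
  shows "astar d r s (d - 2) + astar d r s (d - 1) = astar d r s (d - 1) + astar d r s d
         \<longleftrightarrow> r = s"
proof -
  obtain n where d: "d = n + 2" using assms(1) by (metis add.commute le_Suc_ex)
  define t where "t = r + s"
  have t: "t > -2" using assms by (simp add: t_def)
  have b: "bstar d r s d = 0" by (simp add: bstar_def)
  have "astar d r s (d - 2) + astar d r s (d - 1) = astar d r s (d - 1) + astar d r s d
     \<longleftrightarrow> bstar (n+2) r s n + cstar (n+2) r s n = cstar (n+2) r s (n+2)"
    using b by (simp add: astar_def d) linarith
  also have "\<dots> \<longleftrightarrow> -2*(2+s)*(real n + 5 + t)/((4+t)*(5+t)) + real n*(-3-r)*(3+t)/((5+t)*(6+t))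
      = - real (n+2)*(1+r)/(2+t)"
    using t unfolding bstar_dm2[OF t[unfolded t_def]] cstar_dm2[OF t[unfolded t_def]] cstar_d t_def
    by (simp add: add.assoc)
  also have "\<dots> \<longleftrightarrow> (r - s) * (2*(t+3)*(t+5)*(2*real (n+2)+t+2)) = 0"
  proof -
    let ?L = "-2*(2+s)*(real n + 5 + t)/((4+t)*(5+t)) + real n*(-3-r)*(3+t)/((5+t)*(6+t))"
    let ?R = "- real (n+2)*(1+r)/(2+t)"
    have nz: "2+t \<noteq> 0" "4+t \<noteq> 0" "5+t \<noteq> 0" "6+t \<noteq> 0" using t by auto
    have key: "(?L - ?R) * ((2+t)*(4+t)*(5+t)*(6+t)) = (r - s) * (2*(t+3)*(t+5)*(2*real (n+2)+t+2))"
    proof -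
      have g: "\<And>A B C a b c e::real. a \<noteq> 0 \<Longrightarrow> b \<noteq> 0 \<Longrightarrow> c \<noteq> 0 \<Longrightarrow> e \<noteq> 0 \<Longrightarrow>
        (A/(a*b) + B/(b*c) - C/e) * (e*a*b*c) = A*e*c + B*e*a - C*a*b*c"
        by (simp add: field_simps)
      have "(?L - ?R) * ((2+t)*(4+t)*(5+t)*(6+t)) = (-2*(2+s)*(real n + 5 + t))*(2+t)*(6+t)
          + (real n*(-3-r)*(3+t))*(2+t)*(4+t) - (- real (n+2)*(1+r))*(4+t)*(5+t)*(6+t)"
        using g[OF nz(2) nz(3) nz(4) nz(1)] by simp
      also have "\<dots> = (r - s) * (2*(t+3)*(t+5)*(2*real (n+2)+t+2))"
        unfolding t_def by (simp add: algebra_simps)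
      finally show ?thesis .
    qed
    have "?L = ?R \<longleftrightarrow> (?L - ?R) * ((2+t)*(4+t)*(5+t)*(6+t)) = 0" using nz by simp
    then show ?thesis unfolding key .
  qed
  also have "\<dots> \<longleftrightarrow> r = s"
    using t by simp
  finally show ?thesis .
qed

end
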